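(* Let $G(r,z)$ be a real symmetric $(D-2)\times(D-2)$ matrix-valued function on $\{r\ge 0\}$, continuous, with $|\det G|=r^2$, satisfying $G^{-1}\vec\nabla^2G=(G^{-1}\vec\nabla G)^2$ for $r>0$, and such that $G$ and its derivatives remain finite as $r\to0$ (except possibly at isolated values of $z$). Let $[z_1,z_2]$ be a rod of $G$, i.e. an interval of the $z$-axis such that $\dim\ker G(0,z)=1$ for all $z\in\,]z_1,z_2[$ (bounded by consecutive isolated values of $z$ where this fails). Then there exists a constant orthogonal matrix $\Lambda_*$ such that $\tilde G(r,z)=\Lambda_*^TG(r,z)\Lambda_*$ satisfies $\tilde G_{1i}(0,z)=0$ for all $i=1,\dots,D-2$ and all $z\in[z_1,z_2]$.
   Context: Here $\vec\nabla^2=\partial_r^2+\frac1r\partial_r+\partial_z^2$ and $(G^{-1}\vec\nabla G)^2=(G^{-1}\partial_rG)^2+(G^{-1}\partial_zG)^2$ (gradient of a flat 3D Euclidean space $dr^2+r^2d\gamma^2+dz^2$ acting on axisymmetric fields). Rods: the $z$-axis at $r=0$ is divided by isolated points $a_1<\dots<a_N$, at which $\dim\ker G(0,z)\neq1$, into intervals $[-\infty,a_1],[a_1,a_2],\dots,[a_N,\infty]$, on whose interiors $\dim\ker G(0,z)=1$; these intervals are called rods. *)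

theory Defs
  imports "HOL-Analysis.Analysis"
begin

definition ker_dim :: "real^'n^'n \<Rightarrow> nat" where
  "ker_dim A = dim {x :: real^'n. A *v x = 0}"

definition field_eq ::
  "real \<Rightarrow> real^'n^'n \<Rightarrow> real^'n^'n \<Rightarrow> real^'n^'n \<Rightarrow> real^'n^'n \<Rightarrow> real^'n^'n \<Rightarrow> bool" where
  "field_eq r A Ar Az Arr Azz \<longleftrightarrow>
     matrix_inv A ** (Arr + (1 / r) *\<^sub>R Ar + Azz)
       = (matrix_inv A ** Ar) ** (matrix_inv A ** Ar) + (matrix_inv A ** Az) ** (matrix_inv A ** Az)"

definition discrete_set :: "real set \<Rightarrow> bool" where
  "discrete_set S \<longleftrightarrow> (\<forall>z. \<exists>e>0. \<forall>w\<in>S. w \<noteq> z \<longrightarrow> \<bar>w - z\<bar> \<ge> e)"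

end

theory Submission
  imports Defs
begin

lemma minv:
  fixes A :: "real^'n^'n"
  assumes "det A \<noteq> 0"
  shows "A ** matrix_inv A = mat 1" "matrix_inv A ** A = mat 1"
proof -
  have "invertible A" using assms invertible_det_nz by blast
  then have "\<exists>A'. A ** A' = mat 1 \<and> A' ** A = mat 1" unfolding invertible_def by blast
  then have "A ** matrix_inv A = mat 1 \<and> matrix_inv A ** A = mat 1"
    unfolding matrix_inv_def by (rule someI_ex)
  then show "A ** matrix_inv A = mat 1" "matrix_inv A ** A = mat 1" by auto
qed

lemma minv_unique:
  fixes A B :: "real^'n^'n"
  assumes "A ** B = mat 1" "B ** A = mat 1"
  shows "matrix_inv A = B"
proof -
  have "invertible A" using assms unfolding invertible_def by blast
  then have d: "det A \<noteq> 0" using invertible_det_nz by blast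
  have "B ** (A ** matrix_inv A) = B" using minv[OF d] by simp
  then show ?thesis using assms by (simp add: matrix_mul_assoc)
qed

lemma minv_entry:
  fixes A :: "real^'n^'n"
  assumes "det A \<noteq> 0"
  shows "matrix_inv A $ a $ b = det (\<chi> i j. if j = a then axis b 1 $ i else A$i$j) / det A"
proof -
  have "A *v (matrix_inv A *v axis b 1) = axis b 1"
    using minv[OF assms] by (simp add: matrix_vector_mul_assoc)
  then have "matrix_inv A *v axis b 1 = (\<chi> k. det(\<chi> i j. if j=k then axis b 1$i else A$i$j) / det A)"
    using cramer[OF assms] by blast
  then have "(matrix_inv A *v axis b 1) $ a = det (\<chi> i j. if j = a then axis b 1 $ i else A$i$j) / det A"
    by simp
  then show ?thesis by (simp add: matrix_vector_mult_basis column_def)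
qed

lemma tendsto_det:
  fixes A :: "'a \<Rightarrow> real^'n^'n"
  assumes "\<And>i j. ((\<lambda>x. A x $ i $ j) \<longlongrightarrow> A0 $ i $ j) F"
  shows "((\<lambda>x. det (A x)) \<longlongrightarrow> det A0) F"
  unfolding det_def
  by (intro tendsto_intros assms)

lemma tendsto_entry:
  fixes A :: "'a \<Rightarrow> real^'n^'m"
  assumes "(A \<longlongrightarrow> A0) F"
  shows "((\<lambda>x. A x $ i $ j) \<longlongrightarrow> A0 $ i $ j) F"
  by (intro tendsto_vec_nth assms)

lemma entry_le_norm:
  fixes A :: "real^'n^'m"
  shows "\<bar>A $ i $ j\<bar> \<le> norm A"
  using component_le_norm_cart[of "A$i" j] Finite_Cartesian_Product.norm_nth_le[of A i] by simp

lemma norm_mv_le: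
  fixes A :: "real^'n^'m"
  shows "norm (A *v x) \<le> real CARD('m) * real CARD('n) * norm A * norm x"
proof -
  have "norm (A *v x) \<le> onorm ((*v) A) * norm x"
    by (rule onorm) simp
  also have "onorm ((*v) A) \<le> real CARD('m) * real CARD('n) * norm A"
    by (rule onorm_le_matrix_component) (rule entry_le_norm)
  finally show ?thesis by (simp add: mult_right_mono)
qed

lemma bdd_mult_zero:
  fixes f g :: "'a \<Rightarrow> real"
  assumes "eventually (\<lambda>x. \<bar>g x\<bar> \<le> B) F" "(f \<longlongrightarrow> 0) F"
  shows "((\<lambda>x. g x * f x) \<longlongrightarrow> 0) F"
proof (rule Lim_null_comparison)
  show "eventually (\<lambda>x. norm (g x * f x) \<le> B * \<bar>f x\<bar>) F"
    using assms(1) by eventually_elim (simp add: abs_mult mult_right_mono)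
  show "((\<lambda>x. B * \<bar>f x\<bar>) \<longlongrightarrow> 0) F"
    using tendsto_mult_right_zero[OF tendsto_rabs_zero[OF assms(2)]] by simp
qed

lemma bdd_scaleR_zero:
  fixes f :: "'a \<Rightarrow> 'b::real_normed_vector" and g :: "'a \<Rightarrow> real"
  assumes "eventually (\<lambda>x. norm (f x) \<le> B) F" "(g \<longlongrightarrow> 0) F"
  shows "((\<lambda>x. g x *\<^sub>R f x) \<longlongrightarrow> 0) F"
proof (rule Lim_null_comparison)
  show "eventually (\<lambda>x. norm (g x *\<^sub>R f x) \<le> B * \<bar>g x\<bar>) F"
    using assms(1) by eventually_elim (simp add: mult.commute[of B] mult_left_mono)
  show "((\<lambda>x. B * \<bar>g x\<bar>) \<longlongrightarrow> 0) F"
    using tendsto_mult_right_zero[OF tendsto_rabs_zero[OF assms(2)]] by simp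
qed

lemma sum_if_out: "(\<Sum>a\<in>A. if P then f a else (0::real)) = (if P then \<Sum>a\<in>A. f a else 0)"
  by simp

lemma conj_mult_expand:
  fixes Q P N :: "real^'n^'n"
  assumes ent: "\<And>a b. N $ a $ b = s * D a b"
  shows "(Q ** N ** Q + P ** N ** P) $ j $ j = s * ((\<Sum>b\<in>UNIV. \<Sum>a\<in>UNIV. Q$j$a * D a b * Q$b$j)
       + (\<Sum>b\<in>UNIV. \<Sum>a\<in>UNIV. P$j$a * D a b * P$b$j))"
  apply (simp only: matrix_matrix_mult_def vec_lambda_beta vector_add_component ent)
  apply (simp add: sum_distrib_left sum_distrib_right mult_ac distrib_left)
  done

lemma d0_lemma:
  fixes M0 :: "real^'n^'n"
  assumes M0k: "\<And>i. M0 $ i $ k = 0" and M0k': "\<And>i. M0 $ k $ i = 0"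
    and ker: "\<And>x. M0 *v x = 0 \<Longrightarrow> x = x$k *\<^sub>R axis k 1"
  shows "det (\<chi> i j. if j = k then axis k 1 $ i else M0$i$j) \<noteq> 0"
proof -
  define X where "X = (\<chi> i j. if j = k then axis k 1 $ i else M0$i$j)"
  have XE: "X *v x = M0 *v x + x$k *\<^sub>R axis k 1" for x
  proof -
    have "X = M0 + (\<chi> i j. if j = k then axis k 1 $ i else 0)"
      unfolding X_def vec_eq_iff using M0k by simp
    moreover have "(\<chi> i j. if j = k then axis k 1 $ i else (0::real)) *v x = x$k *\<^sub>R axis k 1"
      by (simp add: matrix_vector_mult_def vec_eq_iff axis_def if_distrib[of "\<lambda>c. c * _"] cong: if_cong)
    ultimately show ?thesis by (simp add: matrix_vector_mult_add_rdistrib)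
  qed
  have inj0: "x = 0" if "X *v x = 0" for x
  proof -
    have "(M0 *v x) $ k = 0"
      by (simp add: matrix_vector_mult_def M0k')
    moreover have "(X *v x) $ k = (M0 *v x) $ k + x $ k"
      unfolding XE by simp
    ultimately have "x $ k = 0" using that by simp
    then have "M0 *v x = 0" using that XE[of x] by simp
    then show "x = 0" using ker[of x] \<open>x$k = 0\<close> by simp
  qed
  have "linear ((*v) X)" by simp
  then have "inj ((*v) X)"
    using inj0 linear_injective_0 by blast
  then have "det (matrix ((*v) X)) \<noteq> 0"
    using det_nz_iff_inj[of "(*v) X"] by simp
  then show ?thesis unfolding X_def by simp
qed
lemma core:
  fixes M P Q :: "real \<Rightarrow> real^'n^'n" and M0 :: "real^'n^'n" and k :: 'n
  assumes M: "(M \<longlongrightarrow> M0) (at_right 0)"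
    and sym0: "transpose M0 = M0"
    and ker0: "M0 *v axis k 1 = 0" "\<And>x. M0 *v x = 0 \<Longrightarrow> x = x$k *\<^sub>R axis k 1"
    and det: "eventually (\<lambda>r. \<bar>det (M r)\<bar> = r^2) (at_right 0)"
    and symP: "eventually (\<lambda>r. transpose (P r) = P r \<and> transpose (Q r) = Q r) (at_right 0)"
    and bdd: "eventually (\<lambda>r. norm (P r) \<le> B \<and> norm (Q r) \<le> B) (at_right 0)"
    and eq: "((\<lambda>r. Q r ** (r^2 *\<^sub>R matrix_inv (M r)) ** Q r + P r ** (r^2 *\<^sub>R matrix_inv (M r)) ** P r) \<longlongrightarrow> 0) (at_right 0)"
  shows "((\<lambda>r. P r *v axis k 1) \<longlongrightarrow> 0) (at_right 0)"
proof -
  define Dm where "Dm a b A = det (\<chi> i j. if j = a then axis b 1 $ i else (A::real^'n^'n)$i$j)" for a b A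
  have Dlim: "((\<lambda>r. Dm a b (M r)) \<longlongrightarrow> Dm a b M0) (at_right 0)" for a b
    unfolding Dm_def
  proof (rule tendsto_det)
    fix i j
    show "((\<lambda>x. (\<chi> i j. if j = a then axis b 1 $ i else M x $ i $ j) $ i $ j) \<longlongrightarrow>
        (\<chi> i j. if j = a then axis b 1 $ i else M0 $ i $ j) $ i $ j) (at_right 0)"
      by (cases "j = a") (simp_all add: tendsto_entry[OF M])
  qed
  have M0k: "M0 $ i $ k = 0" for i
  proof -
    have "(M0 *v axis k 1) $ i = 0" using ker0(1) by simp
    then show ?thesis by (simp add: matrix_vector_mult_basis column_def)
  qed
  have M0k': "M0 $ k $ i = 0" for i
    using M0k[of i] sym0 by (metis transpose_def vec_lambda_beta)
  define d where "d = Dm k k M0"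
  have D0: "Dm a b M0 = (if b = k then (if a = k then d else 0) else 0)" for a b
  proof (cases "b = k")
    case False
    have "row k (\<chi> i j. if j = a then axis b 1 $ i else M0$i$j) = 0"
      using False by (simp add: row_def vec_eq_iff M0k' axis_def)
    then show ?thesis unfolding Dm_def using False det_zero_row(1) by auto
  next
    case True
    show ?thesis
    proof (cases "a = k")
      case True
      then show ?thesis using \<open>b = k\<close> by (simp add: d_def)
    next
      case False
      have "column k (\<chi> i j. if j = a then axis b 1 $ i else M0$i$j) = 0"
        using False by (simp add: column_def vec_eq_iff M0k)
      then show ?thesis unfolding Dm_def using False det_zero_column(1) by auto
    qed
  qed
  have d0: "d \<noteq> 0"
    unfolding d_def Dm_def by (rule d0_lemma[OF M0k M0k' ker0(2)])
  show ?thesis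
  proof (rule vec_tendstoI)
    fix j
    define s where "s r = r^2 / det (M r)" for r
    define W where "W r = (\<Sum>b\<in>UNIV. \<Sum>a\<in>UNIV. Q r$j$a * Dm a b (M r) * Q r$b$j)
       + (\<Sum>b\<in>UNIV. \<Sum>a\<in>UNIV. P r$j$a * Dm a b (M r) * P r$b$j)" for r
    define X where "X r = Q r ** (r^2 *\<^sub>R matrix_inv (M r)) ** Q r + P r ** (r^2 *\<^sub>R matrix_inv (M r)) ** P r" for r
    have pos: "eventually (\<lambda>r. r > (0::real)) (at_right 0)"
      by (simp add: eventually_at_right_less)
    have XW: "eventually (\<lambda>r. X r $ j $ j = s r * W r \<and> \<bar>s r\<bar> = 1) (at_right 0)"
      using det pos
    proof eventually_elim
      case (elim r)
      then have dnz: "det (M r) \<noteq> 0" by auto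
      have ent: "(r^2 *\<^sub>R matrix_inv (M r)) $ a $ b = s r * Dm a b (M r)" for a b
        by (simp add: minv_entry[OF dnz] s_def Dm_def)
      have "X r $ j $ j = s r * W r"
        unfolding X_def W_def by (rule conj_mult_expand) (rule ent)
      moreover have "\<bar>s r\<bar> = 1" using elim dnz by (simp add: s_def abs_div)
      ultimately show ?case by simp
    qed
    have Xj: "((\<lambda>r. X r $ j $ j) \<longlongrightarrow> 0) (at_right 0)"
      using tendsto_entry[OF eq[folded X_def], of j j] by simp
    have Wlim: "(W \<longlongrightarrow> 0) (at_right 0)"
    proof (rule Lim_null_comparison)
      show "eventually (\<lambda>r. norm (W r) \<le> \<bar>X r $ j $ j\<bar>) (at_right 0)"
        using XW by eventually_elim (simp add: abs_mult)
      show "((\<lambda>r. \<bar>X r $ j $ j\<bar>) \<longlongrightarrow> 0) (at_right 0)"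
        using tendsto_rabs_zero[OF Xj] .
    qed
    define W0 where "W0 r = d * ((Q r$j$k)^2 + (P r$j$k)^2)" for r
    have WW0: "eventually (\<lambda>r. W r - W0 r = (\<Sum>b\<in>UNIV. \<Sum>a\<in>UNIV. Q r$b$j * (Q r$j$a * (Dm a b (M r) - Dm a b M0)))
       + (\<Sum>b\<in>UNIV. \<Sum>a\<in>UNIV. P r$b$j * (P r$j$a * (Dm a b (M r) - Dm a b M0)))) (at_right 0)"
      using symP
    proof eventually_elim
      case (elim r)
      have qs: "Q r $ k $ j = Q r $ j $ k" "P r $ k $ j = P r $ j $ k"
        using elim by (metis transpose_def vec_lambda_beta)+
      have e1: "(\<Sum>b\<in>UNIV. \<Sum>a\<in>UNIV. Q r$j$a * Dm a b M0 * Q r$b$j) = d * (Q r$j$k)^2"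
        by (simp add: D0 if_distrib[of "\<lambda>c. c * _"] if_distrib[of "\<lambda>c. _ * c"] sum_if_out qs power2_eq_square cong: if_cong)
      have e2: "(\<Sum>b\<in>UNIV. \<Sum>a\<in>UNIV. P r$j$a * Dm a b M0 * P r$b$j) = d * (P r$j$k)^2"
        by (simp add: D0 if_distrib[of "\<lambda>c. c * _"] if_distrib[of "\<lambda>c. _ * c"] sum_if_out qs power2_eq_square cong: if_cong)
      have "W r - W0 r = ((\<Sum>b\<in>UNIV. \<Sum>a\<in>UNIV. Q r$j$a * Dm a b (M r) * Q r$b$j) - (\<Sum>b\<in>UNIV. \<Sum>a\<in>UNIV. Q r$j$a * Dm a b M0 * Q r$b$j))
         + ((\<Sum>b\<in>UNIV. \<Sum>a\<in>UNIV. P r$j$a * Dm a b (M r) * P r$b$j) - (\<Sum>b\<in>UNIV. \<Sum>a\<in>UNIV. P r$j$a * Dm a b M0 * P r$b$j))"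
        unfolding W_def W0_def e1 e2 by (simp add: algebra_simps)
      also have "\<dots> = (\<Sum>b\<in>UNIV. \<Sum>a\<in>UNIV. Q r$b$j * (Q r$j$a * (Dm a b (M r) - Dm a b M0)))
       + (\<Sum>b\<in>UNIV. \<Sum>a\<in>UNIV. P r$b$j * (P r$j$a * (Dm a b (M r) - Dm a b M0)))"
        by (simp only: sum_subtractf[symmetric]) (simp add: algebra_simps)
      finally show ?case .
    qed
    have ebQ: "eventually (\<lambda>r. \<bar>Q r $ a $ b\<bar> \<le> B) (at_right 0)" for a b
      using bdd by eventually_elim (metis entry_le_norm order_trans)
    have ebP: "eventually (\<lambda>r. \<bar>P r $ a $ b\<bar> \<le> B) (at_right 0)" for a b
      using bdd by eventually_elim (metis entry_le_norm order_trans)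
    have Dz: "((\<lambda>r. Dm a b (M r) - Dm a b M0) \<longlongrightarrow> 0) (at_right 0)" for a b
      using tendsto_diff[OF Dlim tendsto_const, of a b "Dm a b M0"] by simp
    have Elim: "((\<lambda>r. W r - W0 r) \<longlongrightarrow> 0) (at_right 0)"
    proof -
      have "((\<lambda>r. (\<Sum>b\<in>UNIV. \<Sum>a\<in>UNIV. Q r$b$j * (Q r$j$a * (Dm a b (M r) - Dm a b M0)))
       + (\<Sum>b\<in>UNIV. \<Sum>a\<in>UNIV. P r$b$j * (P r$j$a * (Dm a b (M r) - Dm a b M0)))) \<longlongrightarrow> 0) (at_right 0)"
        by (intro tendsto_add_zero tendsto_null_sum bdd_mult_zero[OF ebQ] bdd_mult_zero[OF ebP] Dz)
      moreover have "eventually (\<lambda>r. (\<Sum>b\<in>UNIV. \<Sum>a\<in>UNIV. Q r$b$j * (Q r$j$a * (Dm a b (M r) - Dm a b M0)))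
       + (\<Sum>b\<in>UNIV. \<Sum>a\<in>UNIV. P r$b$j * (P r$j$a * (Dm a b (M r) - Dm a b M0))) = W r - W0 r) (at_right 0)"
        using WW0 by eventually_elim simp
      ultimately show ?thesis by (rule Lim_transform_eventually)
    qed
    have W0lim: "(W0 \<longlongrightarrow> 0) (at_right 0)"
      using tendsto_diff[OF Wlim Elim] by simp
    have P2: "((\<lambda>r. (P r $ j $ k)^2) \<longlongrightarrow> 0) (at_right 0)"
    proof (rule Lim_null_comparison)
      show "eventually (\<lambda>r. norm ((P r $ j $ k)^2) \<le> \<bar>W0 r\<bar> / \<bar>d\<bar>) (at_right 0)"
      proof (rule always_eventually, rule allI)
        fix r
        have "(P r $ j $ k)^2 \<le> (Q r$j$k)^2 + (P r$j$k)^2" by simp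
        also have "\<dots> = \<bar>W0 r\<bar> / \<bar>d\<bar>"
          using d0 by (simp add: W0_def abs_mult)
        finally show "norm ((P r $ j $ k)^2) \<le> \<bar>W0 r\<bar> / \<bar>d\<bar>" by simp
      qed
      show "((\<lambda>r. \<bar>W0 r\<bar> / \<bar>d\<bar>) \<longlongrightarrow> 0) (at_right 0)"
        using tendsto_divide[OF tendsto_rabs_zero[OF W0lim] tendsto_const, of "\<bar>d\<bar>"] d0 by simp
    qed
    have "((\<lambda>r. sqrt ((P r $ j $ k)^2)) \<longlongrightarrow> 0) (at_right 0)"
      using tendsto_real_sqrt[OF P2] by simp
    then have "((\<lambda>r. P r $ j $ k) \<longlongrightarrow> 0) (at_right 0)"
      by (simp add: tendsto_rabs_zero_iff)
    then show "((\<lambda>r. (P r *v axis k 1) $ j) \<longlongrightarrow> (0::real^'n) $ j) (at_right 0)"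
      by (simp add: matrix_vector_mult_basis column_def)
  qed
qed

lemma mat_add_rdistrib: "((A::real^'n^'m) + B) ** C = A ** C + B ** C"
  by (vector matrix_matrix_mult_def sum.distrib[symmetric] field_simps)

lemma conj_linear:
  fixes L :: "real^'n^'n"
  shows "bounded_linear (\<lambda>X::real^'n^'n. transpose L ** X ** L)"
proof -
  have "linear (\<lambda>X::real^'n^'n. transpose L ** X ** L)"
    by (rule linearI) (simp_all add: matrix_add_ldistrib mat_add_rdistrib matrix_scalar_ac scalar_matrix_assoc)
  then show ?thesis using linear_conv_bounded_linear by blast
qed

lemma core_u:
  fixes M P Q :: "real \<Rightarrow> real^'n^'n" and M0 :: "real^'n^'n" and u :: "real^'n"
  assumes M: "(M \<longlongrightarrow> M0) (at_right 0)"
    and sym0: "transpose M0 = M0"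
    and u: "norm u = 1" "M0 *v u = 0" "\<And>x. M0 *v x = 0 \<Longrightarrow> x = (u \<bullet> x) *\<^sub>R u"
    and det: "eventually (\<lambda>r. \<bar>det (M r)\<bar> = r^2) (at_right 0)"
    and symP: "eventually (\<lambda>r. transpose (P r) = P r \<and> transpose (Q r) = Q r) (at_right 0)"
    and bdd: "eventually (\<lambda>r. norm (P r) \<le> B \<and> norm (Q r) \<le> B) (at_right 0)"
    and eq: "((\<lambda>r. Q r ** (r^2 *\<^sub>R matrix_inv (M r)) ** Q r + P r ** (r^2 *\<^sub>R matrix_inv (M r)) ** P r) \<longlongrightarrow> 0) (at_right 0)"
  shows "((\<lambda>r. P r *v u) \<longlongrightarrow> 0) (at_right 0)"
proof -
  obtain k :: 'n where True by simp
  obtain L where L: "orthogonal_matrix L" "L *v axis k 1 = u"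
    using orthogonal_matrix_exists_basis[OF u(1)] by metis
  have LtL: "transpose L ** L = mat 1" and LLt: "L ** transpose L = mat 1"
    using L(1) unfolding orthogonal_matrix_def by auto
  define C where "C X = transpose L ** X ** L" for X :: "real^'n^'n"
  have bl: "bounded_linear C" unfolding C_def by (rule conj_linear)
  have Cmul: "C X ** C Y = C (X ** Y)" for X Y
  proof -
    have "C X ** C Y = transpose L ** X ** (L ** transpose L) ** Y ** L"
      unfolding C_def by (simp add: matrix_mul_assoc)
    then show ?thesis unfolding C_def LLt by (simp add: matrix_mul_assoc)
  qed
  have C1: "C (mat 1) = mat 1" unfolding C_def using LtL by simp
  have detL: "det L * det L = 1"
    using arg_cong[OF LtL, of det] by (simp add: det_mul)
  have Cdet: "det (C X) = det X" for X
    unfolding C_def using detL by (simp add: det_mul)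
  have Cinv: "matrix_inv (C X) = C (matrix_inv X)" if "det X \<noteq> 0" for X
    by (rule minv_unique) (simp_all add: Cmul minv[OF that] C1)
  have Cscale: "C (c *\<^sub>R X) = c *\<^sub>R C X" for c X
    using linear_scale[OF bounded_linear.linear[OF bl]] by blast
  have Ctr: "transpose (C X) = C (transpose X)" for X
    unfolding C_def by (simp add: matrix_transpose_mul matrix_mul_assoc)
  obtain K where K: "\<And>X. norm (C X) \<le> norm X * K" and K0: "K > 0"
    using bounded_linear.pos_bounded[OF bl] by blast
  have CM: "((\<lambda>r. C (M r)) \<longlongrightarrow> C M0) (at_right 0)"
    using bounded_linear.tendsto[OF bl M] .
  have "((\<lambda>r. C (P r) *v axis k 1) \<longlongrightarrow> 0) (at_right 0)"
  proof (rule core[OF CM, where B = "B * K"])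
    show "transpose (C M0) = C M0" using sym0 Ctr by simp
    have CMk: "C M0 *v axis k 1 = transpose L *v (M0 *v u)"
      unfolding C_def using L(2) by (simp add: matrix_vector_mul_assoc[symmetric])
    then show "C M0 *v axis k 1 = 0" using u(2) by simp
    fix x
    assume x: "C M0 *v x = 0"
    have "L *v (C M0 *v x) = M0 *v (L *v x)"
      unfolding C_def by (simp add: matrix_vector_mul_assoc matrix_mul_assoc LLt)
    then have "M0 *v (L *v x) = 0" using x by simp
    define c where "c = u \<bullet> (L *v x)"
    have Lx: "L *v x = c *\<^sub>R u" using u(3) \<open>M0 *v (L *v x) = 0\<close> unfolding c_def by blast
    have "transpose L *v (L *v x) = c *\<^sub>R (transpose L *v u)"
      unfolding Lx by (simp add: matrix_vector_mult_scaleR)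
    moreover have "transpose L *v (L *v axis k 1) = axis k 1"
      using LtL by (simp add: matrix_vector_mul_assoc)
    moreover have "transpose L *v (L *v x) = x"
      using LtL by (simp add: matrix_vector_mul_assoc)
    ultimately have xe: "x = c *\<^sub>R axis k 1" using L(2) by simp
    then have "x $ k = c" by (subst xe) (simp add: axis_def)
    then show "x = x $ k *\<^sub>R axis k 1" using xe by simp
  next
    show "eventually (\<lambda>r. \<bar>det (C (M r))\<bar> = r^2) (at_right 0)"
      using det by (simp add: Cdet)
    show "eventually (\<lambda>r. transpose (C (P r)) = C (P r) \<and> transpose (C (Q r)) = C (Q r)) (at_right 0)"
      using symP by eventually_elim (simp add: Ctr)
    show "eventually (\<lambda>r. norm (C (P r)) \<le> B * K \<and> norm (C (Q r)) \<le> B * K) (at_right 0)"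
      using bdd
    proof eventually_elim
      case (elim r)
      have "norm (P r) * K \<le> B * K" "norm (Q r) * K \<le> B * K"
        using elim K0 by (simp_all add: mult_right_mono)
      then show ?case using K[of "P r"] K[of "Q r"] by linarith
    qed
    have dpos: "eventually (\<lambda>r. det (M r) \<noteq> 0) (at_right 0)"
      using det eventually_at_right_less[of 0]
      by eventually_elim auto
    have "((\<lambda>r. C (Q r ** (r^2 *\<^sub>R matrix_inv (M r)) ** Q r + P r ** (r^2 *\<^sub>R matrix_inv (M r)) ** P r)) \<longlongrightarrow> C 0) (at_right 0)"
      using bounded_linear.tendsto[OF bl eq] .
    moreover have "eventually (\<lambda>r. C (Q r ** (r^2 *\<^sub>R matrix_inv (M r)) ** Q r + P r ** (r^2 *\<^sub>R matrix_inv (M r)) ** P r)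
       = C (Q r) ** (r^2 *\<^sub>R matrix_inv (C (M r))) ** C (Q r) + C (P r) ** (r^2 *\<^sub>R matrix_inv (C (M r))) ** C (P r)) (at_right 0)"
      using dpos
    proof eventually_elim
      case (elim r)
      show ?case
        using linear_add[OF bounded_linear.linear[OF bl]]
        by (simp add: Cinv[OF elim] Cscale[symmetric] Cmul)
    qed
    ultimately have "((\<lambda>r. C (Q r) ** (r^2 *\<^sub>R matrix_inv (C (M r))) ** C (Q r) + C (P r) ** (r^2 *\<^sub>R matrix_inv (C (M r))) ** C (P r)) \<longlongrightarrow> C 0) (at_right 0)"
      by (rule Lim_transform_eventually)
    then show "((\<lambda>r. C (Q r) ** (r^2 *\<^sub>R matrix_inv (C (M r))) ** C (Q r) + C (P r) ** (r^2 *\<^sub>R matrix_inv (C (M r))) ** C (P r)) \<longlongrightarrow> 0) (at_right 0)"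
      using linear_0[OF bounded_linear.linear[OF bl]] by simp
  qed
  then have "((\<lambda>r. L *v (C (P r) *v axis k 1)) \<longlongrightarrow> L *v 0) (at_right 0)"
    by (intro bounded_linear.tendsto[OF matrix_vector_mul_bounded_linear])
  moreover have "L *v (C (P r) *v axis k 1) = P r *v u" for r
  proof -
    have "L *v (C (P r) *v axis k 1) = ((L ** transpose L) ** P r ** L) *v axis k 1"
      by (simp add: C_def matrix_mul_assoc matrix_vector_mul_assoc)
    also have "\<dots> = P r *v (L *v axis k 1)" by (simp add: LLt matrix_vector_mul_assoc)
    finally show ?thesis using L(2) by simp
  qed
  ultimately show ?thesis by simp
qed

lemma ker_unit:
  fixes A :: "real^'n^'n"
  assumes "ker_dim A = 1"
  obtains u where "norm u = 1" "A *v u = 0" "\<And>x. A *v x = 0 \<Longrightarrow> x = (u \<bullet> x) *\<^sub>R u"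
proof -
  let ?V = "{x :: real^'n. A *v x = 0}"
  obtain Bs where Bs: "Bs \<subseteq> ?V" "independent Bs" "?V \<subseteq> span Bs" "card Bs = dim ?V"
    using basis_exists by blast
  then have "card Bs = 1" using assms unfolding ker_dim_def by simp
  then obtain b where b: "Bs = {b}" by (rule card_1_singletonE)
  then have b0: "b \<noteq> 0" using Bs(2) by simp
  define u where "u = b /\<^sub>R norm b"
  have nu: "norm u = 1" unfolding u_def using b0 by simp
  have Ab: "A *v b = 0" using Bs(1) b by auto
  have Au: "A *v u = 0" unfolding u_def by (simp add: matrix_vector_mult_scaleR Ab)
  have "x = (u \<bullet> x) *\<^sub>R u" if "A *v x = 0" for x
  proof -
    have "x \<in> span {b}" using Bs(3) b that by auto
    then obtain c0 where "x = c0 *\<^sub>R b" by (auto simp: span_singleton)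
    then have c: "x = (c0 * norm b) *\<^sub>R u" unfolding u_def using b0 by simp
    define c where "c = c0 * norm b"
    have c: "x = c *\<^sub>R u" using c c_def by simp
    then have "u \<bullet> x = c" using nu by (simp add: inner_scaleR_right dot_square_norm)
    then show ?thesis using c by simp
  qed
  then show ?thesis using that nu Au by blast
qed

lemma transpose_bl: "bounded_linear (transpose :: real^'n^'m \<Rightarrow> real^'m^'n)"
proof -
  have "linear (transpose :: real^'n^'m \<Rightarrow> real^'m^'n)"
    by (rule linearI) (simp_all add: transpose_def vec_eq_iff)
  then show ?thesis using linear_conv_bounded_linear by blast
qed

lemma sym_deriv:
  fixes f :: "real \<Rightarrow> real^'n^'n"
  assumes "open T" "r \<in> T" "\<And>s. s \<in> T \<Longrightarrow> transpose (f s) = f s"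
    and d: "(f has_vector_derivative f') (at r)"
  shows "transpose f' = f'"
proof -
  have 1: "((\<lambda>s. transpose (f s)) has_vector_derivative transpose f') (at r)"
    using bounded_linear.has_vector_derivative[OF transpose_bl d] .
  have "(f has_vector_derivative transpose f') (at r)"
    using has_vector_derivative_transform_within_open[OF 1 assms(1,2)] assms(3) by blast
  from vector_derivative_unique_at[OF d this] show ?thesis by simp
qed

lemma lower_bound:
  fixes A :: "real^'n^'n"
  assumes sym: "transpose A = A" and u: "norm u = 1" "\<And>x. A *v x = 0 \<Longrightarrow> x = (u \<bullet> x) *\<^sub>R u"
    and Au: "A *v u = 0"
  obtains lam where "lam > 0" "\<And>x. lam * norm (x - (u \<bullet> x) *\<^sub>R u) \<le> norm (A *v x)"
proof -
  define f where "f y = A *v y + (u \<bullet> y) *\<^sub>R u" for y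
  have lin: "linear f" unfolding f_def
    by (rule linearI) (simp_all add: matrix_vector_right_distrib inner_add_right algebra_simps matrix_vector_mult_scaleR)
  have uA: "u \<bullet> (A *v y) = 0" if "A *v u = 0" for y
  proof -
    have "u \<bullet> (A *v y) = (u v* A) \<bullet> y" by (simp add: dot_lmul_matrix)
    also have "u v* A = transpose A *v u" by simp
    also have "\<dots> = 0" using sym that by simp
    finally show ?thesis by simp
  qed
  have "inj f"
  proof -
    have "y = 0" if "f y = 0" for y
    proof -
      have "u \<bullet> f y = u \<bullet> y" unfolding f_def using uA[OF Au] u(1)
        by (simp add: inner_add_right inner_scaleR_right dot_square_norm)
      then have uy: "u \<bullet> y = 0" using that by simp
      then have "A *v y = 0" using that unfolding f_def by simp
      then show "y = 0" using u(2)[OF \<open>A *v y = 0\<close>] uy by simp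
    qed
    then show ?thesis using linear_injective_0[OF lin] by blast
  qed
  then obtain lam where lam: "lam > 0" "\<And>x. lam * norm x \<le> norm (f x)"
    using linear_inj_bounded_below_pos[OF lin] by blast
  show ?thesis
  proof (rule that[OF lam(1)])
    fix x
    define y where "y = x - (u \<bullet> x) *\<^sub>R u"
    have "u \<bullet> y = 0" unfolding y_def using u(1)
      by (simp add: inner_diff_right inner_scaleR_right dot_square_norm)
    moreover have "A *v y = A *v x" unfolding y_def
      by (simp add: matrix_vector_mult_diff_distrib matrix_vector_mult_scaleR Au)
    ultimately have "f y = A *v x" unfolding f_def by simp
    then show "lam * norm (x - (u \<bullet> x) *\<^sub>R u) \<le> norm (A *v x)" using lam(2)[of y] y_def by simp
  qed
qed

lemma Glim_right:
  fixes G :: "real \<Rightarrow> real \<Rightarrow> real^'n^'n"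
  assumes cont: "continuous_on {p. fst p \<ge> 0} (\<lambda>p. G (fst p) (snd p))"
  shows "((\<lambda>r. G r t) \<longlongrightarrow> G 0 t) (at_right 0)"
proof -
  have "continuous_on {0..} (\<lambda>r. (\<lambda>p. G (fst p) (snd p)) ((\<lambda>r. (r, t)) r))"
    by (rule continuous_on_compose2[OF cont]) (auto intro!: continuous_intros)
  then have "continuous_on {0..} (\<lambda>r. G r t)" by simp
  then have "((\<lambda>r. G r t) \<longlongrightarrow> G 0 t) (at 0 within {0..})"
    unfolding continuous_on_def by auto
  then show ?thesis
    by (rule tendsto_within_subset) auto
qed

lemma G0_cont:
  fixes G :: "real \<Rightarrow> real \<Rightarrow> real^'n^'n"
  assumes cont: "continuous_on {p. fst p \<ge> 0} (\<lambda>p. G (fst p) (snd p))"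
  shows "continuous_on UNIV (\<lambda>z. G 0 z)"
proof -
  have "continuous_on UNIV (\<lambda>z. (\<lambda>p. G (fst p) (snd p)) ((\<lambda>z. (0, z)) z))"
    by (rule continuous_on_compose2[OF cont]) (auto intro!: continuous_intros)
  then show ?thesis by simp
qed

lemma mv_right_bl: "bounded_linear (\<lambda>A::real^'n^'m. A *v u)"
proof -
  have "linear (\<lambda>A::real^'n^'m. A *v u)"
    by (rule linearI) (simp_all add: matrix_vector_mult_add_rdistrib scaleR_matrix_vector_assoc)
  then show ?thesis using linear_conv_bounded_linear by blast
qed

lemma axis_limit:
  fixes G Gr Gz Grr Gzz :: "real \<Rightarrow> real \<Rightarrow> real^'n^'n" and t :: real and u :: "real^'n"
  assumes sym: "\<And>r z. r \<ge> 0 \<Longrightarrow> transpose (G r z) = G r z"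
    and cont: "continuous_on {p. fst p \<ge> 0} (\<lambda>p. G (fst p) (snd p))"
    and det: "\<And>r z. r \<ge> 0 \<Longrightarrow> \<bar>det (G r z)\<bar> = r\<^sup>2"
    and dGr: "\<And>r z. r > 0 \<Longrightarrow> ((\<lambda>s. G s z) has_vector_derivative Gr r z) (at r)"
    and dGz: "\<And>r z. r > 0 \<Longrightarrow> ((\<lambda>t. G r t) has_vector_derivative Gz r z) (at z)"
    and eqn: "\<And>r z. r > 0 \<Longrightarrow> field_eq r (G r z) (Gr r z) (Gz r z) (Grr r z) (Gzz r z)"
    and e: "e > 0"
    and bd: "\<And>r. 0 < r \<Longrightarrow> r < e \<Longrightarrow> norm (Gr r t) \<le> B \<and> norm (Gz r t) \<le> B \<and> norm (Grr r t) \<le> B \<and> norm (Gzz r t) \<le> B"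
    and u: "norm u = 1" "G 0 t *v u = 0" "\<And>x. G 0 t *v x = 0 \<Longrightarrow> x = (u \<bullet> x) *\<^sub>R u"
  shows "((\<lambda>r. Gz r t *v u) \<longlongrightarrow> 0) (at_right 0)"
proof (rule core_u[of "\<lambda>r. G r t" "G 0 t" u "\<lambda>r. Gz r t" "\<lambda>r. Gr r t" B])
  have pos: "eventually (\<lambda>r. r > (0::real)) (at_right 0)"
    by (simp add: eventually_at_right_less)
  have pos_e: "eventually (\<lambda>r. 0 < r \<and> r < e) (at_right (0::real))"
    unfolding eventually_at_right_field using e by blast
  show "((\<lambda>r. G r t) \<longlongrightarrow> G 0 t) (at_right 0)" by (rule Glim_right[OF cont])
  show "transpose (G 0 t) = G 0 t" using sym by simp
  show "norm u = 1" "G 0 t *v u = 0" "\<And>x. G 0 t *v x = 0 \<Longrightarrow> x = (u \<bullet> x) *\<^sub>R u" using u by auto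
  show "eventually (\<lambda>r. \<bar>det (G r t)\<bar> = r^2) (at_right 0)"
    using pos by eventually_elim (simp add: det)
  show "eventually (\<lambda>r. transpose (Gz r t) = Gz r t \<and> transpose (Gr r t) = Gr r t) (at_right 0)"
    using pos
  proof eventually_elim
    case (elim r)
    have "transpose (Gz r t) = Gz r t"
      by (rule sym_deriv[where T=UNIV and f="\<lambda>z. G r z"]) (use elim sym dGz in auto)
    moreover have "transpose (Gr r t) = Gr r t"
      by (rule sym_deriv[where T="{0<..}" and f="\<lambda>s. G s t"]) (use elim sym dGr in auto)
    ultimately show ?case by simp
  qed
  show "eventually (\<lambda>r. norm (Gz r t) \<le> B \<and> norm (Gr r t) \<le> B) (at_right 0)"
    using pos_e by eventually_elim (use bd in auto)
  define X where "X r = Gr r t ** (r^2 *\<^sub>R matrix_inv (G r t)) ** Gr r t + Gz r t ** (r^2 *\<^sub>R matrix_inv (G r t)) ** Gz r t" for r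
  have XE: "eventually (\<lambda>r. r^2 *\<^sub>R Grr r t + r *\<^sub>R Gr r t + r^2 *\<^sub>R Gzz r t = X r) (at_right 0)"
    using pos
  proof eventually_elim
    case (elim r)
    define Mi where "Mi = matrix_inv (G r t)"
    have dnz: "det (G r t) \<noteq> 0" using det[of r t] elim by auto
    have GM: "G r t ** Mi = mat 1" unfolding Mi_def by (rule minv(1)[OF dnz])
    define Y where "Y = Grr r t + (1 / r) *\<^sub>R Gr r t + Gzz r t"
    have fe: "Mi ** Y = (Mi ** Gr r t) ** (Mi ** Gr r t) + (Mi ** Gz r t) ** (Mi ** Gz r t)"
      using eqn[OF elim, of t] unfolding field_eq_def Mi_def Y_def by simp
    have "Y = G r t ** (Mi ** Y)" using GM by (simp add: matrix_mul_assoc)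
    also have "\<dots> = Gr r t ** Mi ** Gr r t + Gz r t ** Mi ** Gz r t"
      unfolding fe matrix_add_ldistrib by (simp add: matrix_mul_assoc GM)
    finally have YE: "Y = Gr r t ** Mi ** Gr r t + Gz r t ** Mi ** Gz r t" .
    have "X r = r^2 *\<^sub>R Y"
      unfolding X_def YE Mi_def[symmetric]
      by (simp add: matrix_scalar_ac scalar_matrix_assoc scaleR_add_right)
    also have "\<dots> = r^2 *\<^sub>R Grr r t + r *\<^sub>R Gr r t + r^2 *\<^sub>R Gzz r t"
      unfolding Y_def using elim by (simp add: scaleR_add_right power2_eq_square)
    finally show ?case by simp
  qed
  have r2: "((\<lambda>r::real. r^2) \<longlongrightarrow> 0) (at_right 0)"
    by (intro tendsto_eq_intros) auto
  have r1: "((\<lambda>r::real. r) \<longlongrightarrow> 0) (at_right 0)"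
    by (intro tendsto_eq_intros) auto
  have "((\<lambda>r. r^2 *\<^sub>R Grr r t + r *\<^sub>R Gr r t + r^2 *\<^sub>R Gzz r t) \<longlongrightarrow> 0) (at_right 0)"
  proof -
    have a: "eventually (\<lambda>r. norm (Grr r t) \<le> B) (at_right 0)" using pos_e by eventually_elim (use bd in auto)
    have b: "eventually (\<lambda>r. norm (Gr r t) \<le> B) (at_right 0)" using pos_e by eventually_elim (use bd in auto)
    have c: "eventually (\<lambda>r. norm (Gzz r t) \<le> B) (at_right 0)" using pos_e by eventually_elim (use bd in auto)
    show ?thesis
      using tendsto_add[OF tendsto_add[OF bdd_scaleR_zero[OF a r2] bdd_scaleR_zero[OF b r1]] bdd_scaleR_zero[OF c r2]]
      by simp
  qed
  then have "(X \<longlongrightarrow> 0) (at_right 0)" using XE by (rule Lim_transform_eventually)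
  then show "((\<lambda>r. Gr r t ** (r^2 *\<^sub>R matrix_inv (G r t)) ** Gr r t + Gz r t ** (r^2 *\<^sub>R matrix_inv (G r t)) ** Gz r t) \<longlongrightarrow> 0) (at_right 0)"
    unfolding X_def .
qed

lemma quad:
  fixes G Gz Gzz :: "real \<Rightarrow> real \<Rightarrow> real^'n^'n" and u :: "real^'n"
  assumes dGz: "\<And>r z. r > 0 \<Longrightarrow> ((\<lambda>t. G r t) has_vector_derivative Gz r z) (at z)"
    and dGzz: "\<And>r z. r > 0 \<Longrightarrow> ((\<lambda>t. Gz r t) has_vector_derivative Gzz r z) (at z)"
    and Glim: "\<And>z. ((\<lambda>r. G r z) \<longlongrightarrow> G 0 z) (at_right 0)"
    and e: "e > 0" and bd: "\<And>r s. 0 < r \<Longrightarrow> r < e \<Longrightarrow> \<bar>s - z0\<bar> < e \<Longrightarrow> norm (Gzz r s) \<le> B"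
    and t: "\<bar>t - z0\<bar> < e" and z: "\<bar>z - z0\<bar> < e"
    and ut: "G 0 t *v u = 0" and lim: "((\<lambda>r. Gz r t *v u) \<longlongrightarrow> 0) (at_right 0)"
  shows "norm (G 0 z *v u) \<le> real CARD('n) * real CARD('n) * (\<bar>z - t\<bar> * (3 * B * \<bar>z - t\<bar>)) * norm u"
proof -
  define S where "S = closed_segment t z"
  have SB: "S \<subseteq> ball z0 e" unfolding S_def
    by (rule closed_segment_subset) (use t z in \<open>auto simp: dist_real_def abs_minus_commute\<close>)
  have Sin: "\<bar>s - z0\<bar> < e" if "s \<in> S" for s
    using SB that by (auto simp: dist_real_def abs_minus_commute)
  have Sd: "\<bar>s - t\<bar> \<le> \<bar>z - t\<bar>" if "s \<in> S" for s
    using segment_bound(1)[of s t z] that unfolding S_def by simp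
  have tS: "t \<in> S" unfolding S_def by simp
  have est: "norm (G r z - G r t - (z - t) *\<^sub>R Gz r t) \<le> \<bar>z - t\<bar> * (3 * B * \<bar>z - t\<bar>)"
    if r: "0 < r" "r < e" for r
  proof -
    have B0: "0 \<le> B" using bd[OF r, of z0] e by (metis norm_ge_zero order_trans abs_zero diff_self)
    have inner: "norm (Gz r s - Gz r t) \<le> 3 * B * \<bar>z - t\<bar>" if s: "s \<in> S" for s
    proof -
      have sub: "closed_segment t s \<subseteq> S"
        by (rule closed_segment_subset) (use s tS in \<open>auto simp: S_def\<close>)
      have f1: "norm (Gz r s - Gz r t - (s - t) *\<^sub>R Gzz r t) \<le> norm (s - t) * (2 * B)"
      proof (rule vector_differentiable_bound_linearization[where S=S and f'="Gzz r"])
        show "\<And>x. x \<in> S \<Longrightarrow> (Gz r has_vector_derivative Gzz r x) (at x within S)"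
          using dGzz[OF r(1)] by (auto intro: has_vector_derivative_at_within)
        show "closed_segment t s \<subseteq> S" by (rule sub)
        show "t \<in> S" by (rule tS)
        fix x assume "x \<in> S"
        have "norm (Gzz r x - Gzz r t) \<le> norm (Gzz r x) + norm (Gzz r t)" by (rule norm_triangle_ineq4)
        also have "\<dots> \<le> 2 * B" using bd[OF r Sin[OF \<open>x \<in> S\<close>]] bd[OF r Sin[OF tS]] by simp
        finally show "norm (Gzz r x - Gzz r t) \<le> 2 * B" .
      qed
      have f2: "norm ((s - t) *\<^sub>R Gzz r t) \<le> \<bar>s - t\<bar> * B"
        using bd[OF r Sin[OF tS]] by (simp add: mult_left_mono)
      have f3: "norm (Gz r s - Gz r t) \<le> norm (Gz r s - Gz r t - (s - t) *\<^sub>R Gzz r t) + norm ((s - t) *\<^sub>R Gzz r t)"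
        using norm_triangle_ineq[of "Gz r s - Gz r t - (s - t) *\<^sub>R Gzz r t" "(s - t) *\<^sub>R Gzz r t"]
        by simp
      have "norm (Gz r s - Gz r t) \<le> norm (s - t) * (2 * B) + \<bar>s - t\<bar> * B"
        using f3 add_mono[OF f1 f2] by (rule order_trans)
      then have "norm (Gz r s - Gz r t) \<le> \<bar>s - t\<bar> * (2 * B) + \<bar>s - t\<bar> * B"
        by simp
      also have "\<dots> = 3 * B * \<bar>s - t\<bar>" by simp
      also have "\<dots> \<le> 3 * B * \<bar>z - t\<bar>" using Sd[OF s] B0 by (simp add: mult_left_mono)
      finally show ?thesis .
    qed
    have "norm (G r z - G r t - (z - t) *\<^sub>R Gz r t) \<le> norm (z - t) * (3 * B * \<bar>z - t\<bar>)"
    proof (rule vector_differentiable_bound_linearization[where S=S and f'="Gz r"])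
      show "\<And>x. x \<in> S \<Longrightarrow> (G r has_vector_derivative Gz r x) (at x within S)"
        using dGz[OF r(1)] by (auto intro: has_vector_derivative_at_within)
      show "closed_segment t z \<subseteq> S" unfolding S_def by simp
      show "t \<in> S" by (rule tS)
      show "\<And>x. x \<in> S \<Longrightarrow> norm (Gz r x - Gz r t) \<le> 3 * B * \<bar>z - t\<bar>" by (rule inner)
    qed
    then show ?thesis by simp
  qed
  define V where "V r = G r z *v u - G r t *v u - (z - t) *\<^sub>R (Gz r t *v u)" for r
  have Vlim: "(V \<longlongrightarrow> G 0 z *v u - G 0 t *v u - (z - t) *\<^sub>R 0) (at_right 0)"
    unfolding V_def
    by (intro tendsto_diff tendsto_scaleR tendsto_const lim
        bounded_linear.tendsto[OF mv_right_bl Glim])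
  have "eventually (\<lambda>r. norm (V r) \<le> real CARD('n) * real CARD('n) * (\<bar>z - t\<bar> * (3 * B * \<bar>z - t\<bar>)) * norm u) (at_right 0)"
    unfolding eventually_at_right_field using e
  proof (intro exI[of _ e] conjI allI impI)
    fix r :: real assume r: "0 < r" "r < e"
    have "V r = (G r z - G r t - (z - t) *\<^sub>R Gz r t) *v u"
      unfolding V_def by (simp add: matrix_vector_mult_diff_rdistrib scaleR_matrix_vector_assoc)
    then have "norm (V r) \<le> real CARD('n) * real CARD('n) * norm (G r z - G r t - (z - t) *\<^sub>R Gz r t) * norm u"
      using norm_mv_le by simp
    also have "\<dots> \<le> real CARD('n) * real CARD('n) * (\<bar>z - t\<bar> * (3 * B * \<bar>z - t\<bar>)) * norm u"
      by (intro mult_right_mono mult_left_mono est[OF r]) auto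
    finally show "norm (V r) \<le> real CARD('n) * real CARD('n) * (\<bar>z - t\<bar> * (3 * B * \<bar>z - t\<bar>)) * norm u" .
  qed (use e in auto)
  from Lim_norm_ubound[OF trivial_limit_at_right_real Vlim this] show ?thesis
    using ut by simp
qed

definition outer :: "real^'n \<Rightarrow> real^'n^'n" where
  "outer x = (\<chi> i j. x$i * x$j)"

lemma outer_mv: "outer x *v y = (x \<bullet> y) *\<^sub>R x"
  by (simp add: outer_def matrix_vector_mult_def vec_eq_iff inner_vec_def sum_distrib_left mult_ac)

lemma outer_neg: "outer (- x) = outer x"
  by (simp add: outer_def)

lemma norm_matrix_le_sum:
  fixes A :: "real^'n^'m"
  shows "norm A \<le> (\<Sum>i\<in>UNIV. \<Sum>j\<in>UNIV. \<bar>A $ i $ j\<bar>)"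
proof -
  have "norm A \<le> (\<Sum>i\<in>UNIV. norm (A $ i))"
    by (simp add: norm_vec_def L2_set_le_sum)
  also have "\<dots> \<le> (\<Sum>i\<in>UNIV. \<Sum>j\<in>UNIV. \<bar>A $ i $ j\<bar>)"
    by (intro sum_mono norm_le_l1_cart)
  finally show ?thesis .
qed

lemma outer_diff_le:
  fixes x y :: "real^'n"
  assumes "norm x \<le> 1" "norm y \<le> 1"
  shows "norm (outer x - outer y) \<le> real CARD('n) * real CARD('n) * (2 * norm (x - y))"
proof -
  have ent: "\<bar>(outer x - outer y) $ i $ j\<bar> \<le> 2 * norm (x - y)" for i j
  proof -
    have "(outer x - outer y) $ i $ j = x$i * (x$j - y$j) + (x$i - y$i) * y$j"
      by (simp add: outer_def algebra_simps)
    also have "\<bar>\<dots>\<bar> \<le> \<bar>x$i\<bar> * \<bar>x$j - y$j\<bar> + \<bar>x$i - y$i\<bar> * \<bar>y$j\<bar>"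
      by (metis abs_mult abs_triangle_ineq)
    also have "\<dots> \<le> 1 * norm (x - y) + norm (x - y) * 1"
    proof (intro add_mono mult_mono)
      show "\<bar>x $ i\<bar> \<le> 1" using component_le_norm_cart[of x i] assms(1) by linarith
      show "\<bar>y $ j\<bar> \<le> 1" using component_le_norm_cart[of y j] assms(2) by linarith
      show "\<bar>x $ j - y $ j\<bar> \<le> norm (x - y)" using component_le_norm_cart[of "x - y" j] by simp
      show "\<bar>x $ i - y $ i\<bar> \<le> norm (x - y)" using component_le_norm_cart[of "x - y" i] by simp
    qed auto
    finally show ?thesis by simp
  qed
  have "norm (outer x - outer y) \<le> (\<Sum>i\<in>UNIV. \<Sum>j\<in>UNIV. \<bar>(outer x - outer y) $ i $ j\<bar>)"
    by (rule norm_matrix_le_sum)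
  also have "\<dots> \<le> (\<Sum>i\<in>(UNIV::'n set). \<Sum>j\<in>(UNIV::'n set). 2 * norm (x - y))"
    by (intro sum_mono ent)
  also have "\<dots> = real CARD('n) * real CARD('n) * (2 * norm (x - y))" by simp
  finally show ?thesis .
qed

lemma outer_close:
  fixes x u :: "real^'n"
  assumes x: "norm x = 1" and u: "norm u = 1"
  shows "norm (outer x - outer u) \<le> real CARD('n) * real CARD('n) * (4 * norm (x - (u \<bullet> x) *\<^sub>R u))"
proof -
  define c where "c = u \<bullet> x"
  define s :: real where "s = (if c \<ge> 0 then 1 else -1)"
  define v where "v = s *\<^sub>R u"
  have s2: "s * s = 1" unfolding s_def by simp
  have sc: "s * c = \<bar>c\<bar>" unfolding s_def by simp
  have cle: "\<bar>c\<bar> \<le> 1" unfolding c_def using Cauchy_Schwarz_ineq2[of u x] x u by simp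
  have ov: "outer v = outer u" unfolding v_def s_def by (simp add: outer_neg)
  have nv: "norm v = 1" unfolding v_def s_def using u by simp
  have uu: "u \<bullet> u = 1" using u by (simp add: dot_square_norm)
  have xx: "x \<bullet> x = 1" using x by (simp add: dot_square_norm)
  have d1: "(norm (x - v))^2 = 2 - 2 * \<bar>c\<bar>"
    unfolding power2_norm_eq_inner v_def
    by (simp add: inner_diff_left inner_diff_right uu xx c_def[symmetric] inner_commute[of x u] algebra_simps s2 sc[symmetric])
  have d2: "(norm (x - c *\<^sub>R u))^2 = 1 - c^2"
    unfolding power2_norm_eq_inner
    by (simp add: inner_diff_left inner_diff_right uu xx c_def[symmetric] inner_commute[of x u] algebra_simps power2_eq_square)
  have "(norm (x - v))^2 \<le> (2 * norm (x - c *\<^sub>R u))^2"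
  proof -
    have "\<bar>c\<bar> * \<bar>c\<bar> \<le> \<bar>c\<bar> * 1" by (rule mult_left_mono[OF cle]) simp
    then have "c^2 \<le> \<bar>c\<bar>" by (simp add: power2_eq_square abs_mult_self_eq)
    then show ?thesis unfolding power_mult_distrib d1 d2 using cle by simp
  qed
  then have nd: "norm (x - v) \<le> 2 * norm (x - c *\<^sub>R u)"
    by (rule power2_le_imp_le) simp
  have "norm (outer x - outer u) = norm (outer x - outer v)" using ov by simp
  also have "\<dots> \<le> real CARD('n) * real CARD('n) * (2 * norm (x - v))"
    by (rule outer_diff_le) (simp_all add: x nv)
  also have "\<dots> \<le> real CARD('n) * real CARD('n) * (4 * norm (x - c *\<^sub>R u))"
    using nd by (intro mult_left_mono) auto
  finally show ?thesis unfolding c_def .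
qed

lemma proj_bound:
  fixes A :: "real^'n^'n"
  assumes sym: "transpose A = A" and u: "norm u = 1" "A *v u = 0" "\<And>x. A *v x = 0 \<Longrightarrow> x = (u \<bullet> x) *\<^sub>R u"
  obtains C where "C \<ge> 0" "\<And>x. norm x = 1 \<Longrightarrow> norm (outer x - outer u) \<le> C * norm (A *v x)"
proof -
  obtain lam where lam: "lam > 0" "\<And>x. lam * norm (x - (u \<bullet> x) *\<^sub>R u) \<le> norm (A *v x)"
    using lower_bound[OF sym u(1) u(3) u(2)] by blast
  define C where "C = real CARD('n) * real CARD('n) * 4 / lam"
  show ?thesis
  proof (rule that)
    show "C \<ge> 0" unfolding C_def using lam by simp
    fix x :: "real^'n" assume x: "norm x = 1"
    have "norm (outer x - outer u) \<le> real CARD('n) * real CARD('n) * (4 * norm (x - (u \<bullet> x) *\<^sub>R u))"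
      by (rule outer_close[OF x u(1)])
    also have "\<dots> = C * (lam * norm (x - (u \<bullet> x) *\<^sub>R u))" unfolding C_def using lam by simp
    also have "\<dots> \<le> C * norm (A *v x)"
      using lam(2)[of x] \<open>C \<ge> 0\<close> by (simp add: mult_left_mono)
    finally show "norm (outer x - outer u) \<le> C * norm (A *v x)" .
  qed
qed

lemma deriv0:
  fixes f :: "real \<Rightarrow> 'a::real_normed_vector"
  assumes "d > 0" "\<And>z. \<bar>z - t\<bar> < d \<Longrightarrow> norm (f z - f t) \<le> K * (z - t)^2"
  shows "(f has_derivative (\<lambda>h. 0)) (at t within X)"
  unfolding has_derivative_within
proof (intro conjI)
  show "bounded_linear (\<lambda>h. 0 :: 'a)" by (rule bounded_linear_zero)
  show "((\<lambda>y. (1 / norm (y - t)) *\<^sub>R (f y - (f t + 0))) \<longlongrightarrow> 0) (at t within X)"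
  proof (rule Lim_null_comparison)
    show "eventually (\<lambda>y. norm ((1 / norm (y - t)) *\<^sub>R (f y - (f t + 0))) \<le> \<bar>K\<bar> * \<bar>y - t\<bar>) (at t within X)"
      unfolding eventually_at
    proof (intro exI[of _ d] conjI ballI impI)
      fix y assume y: "y \<noteq> t \<and> dist y t < d"
      then have yt: "\<bar>y - t\<bar> < d" "y \<noteq> t" by (auto simp: dist_real_def)
      have "norm ((1 / norm (y - t)) *\<^sub>R (f y - (f t + 0))) = norm (f y - f t) / \<bar>y - t\<bar>" by simp
      also have "\<dots> \<le> K * (y - t)^2 / \<bar>y - t\<bar>"
        using assms(2)[OF yt(1)] yt(2) by (intro divide_right_mono) auto
      also have "\<dots> = K * \<bar>y - t\<bar>"
      proof -
        obtain a where a: "a = \<bar>y - t\<bar>" by simp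
        have a0: "a \<noteq> 0" using a yt(2) by simp
        have "(y - t)^2 = a^2" using a by simp
        then have "K * (y - t)^2 / \<bar>y - t\<bar> = K * a^2 / a" using a by simp
        also have "\<dots> = K * a" using a0 by (simp add: power2_eq_square)
        finally show ?thesis using a by simp
      qed
      also have "\<dots> \<le> \<bar>K\<bar> * \<bar>y - t\<bar>" by (simp add: mult_right_mono)
      finally show "norm ((1 / norm (y - t)) *\<^sub>R (f y - (f t + 0))) \<le> \<bar>K\<bar> * \<bar>y - t\<bar>" .
    qed (use assms in auto)
    show "((\<lambda>y. \<bar>K\<bar> * \<bar>y - t\<bar>) \<longlongrightarrow> 0) (at t within X)"
      by (intro tendsto_eq_intros) auto
  qed
qed

lemma discrete_finite:
  assumes "discrete_set S"
  shows "finite (S \<inter> {a..b})"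
proof (rule ccontr)
  assume inf: "infinite (S \<inter> {a..b})"
  have bd: "bounded (S \<inter> {a..b})" by (rule bounded_subset[of "{a..b}"]) auto
  obtain x where x: "x islimpt (S \<inter> {a..b})"
    using bounded_infinite_imp_islimpt[OF order_refl bd inf] by auto
  obtain e where e: "e > 0" "\<And>w. w \<in> S \<Longrightarrow> w \<noteq> x \<Longrightarrow> \<bar>w - x\<bar> \<ge> e"
    using assms unfolding discrete_set_def by blast
  obtain y where y: "y \<in> S \<inter> {a..b}" "y \<noteq> x" "dist y x < e"
    using x e(1) unfolding islimpt_approachable by blast
  have "\<bar>y - x\<bar> \<ge> e" using e(2)[of y] y(1,2) by blast
  moreover have "\<bar>y - x\<bar> < e" using y(3) by (simp add: dist_real_def)
  ultimately show False by linarith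
qed

theorem theorem2:
  fixes G Gr Gz Grr Grz Gzz :: "real \<Rightarrow> real \<Rightarrow> real^'n^'n"
    and k :: 'n
    and z1 z2 :: ereal
    and S :: "real set"
  assumes sym: "\<And>r z. r \<ge> 0 \<Longrightarrow> transpose (G r z) = G r z"
    and cont: "continuous_on {p. fst p \<ge> 0} (\<lambda>p. G (fst p) (snd p))"
    and det: "\<And>r z. r \<ge> 0 \<Longrightarrow> \<bar>det (G r z)\<bar> = r\<^sup>2"
    and dGr: "\<And>r z. r > 0 \<Longrightarrow> ((\<lambda>s. G s z) has_vector_derivative Gr r z) (at r)"
    and dGz: "\<And>r z. r > 0 \<Longrightarrow> ((\<lambda>t. G r t) has_vector_derivative Gz r z) (at z)"
    and dGrr: "\<And>r z. r > 0 \<Longrightarrow> ((\<lambda>s. Gr s z) has_vector_derivative Grr r z) (at r)"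
    and dGrz: "\<And>r z. r > 0 \<Longrightarrow> ((\<lambda>t. Gr r t) has_vector_derivative Grz r z) (at z)"
    and dGzz: "\<And>r z. r > 0 \<Longrightarrow> ((\<lambda>t. Gz r t) has_vector_derivative Gzz r z) (at z)"
    and contd: "\<And>H. H \<in> {Gr, Gz, Grr, Grz, Gzz} \<Longrightarrow>
                  continuous_on {p. fst p > 0} (\<lambda>p. H (fst p) (snd p))"
    and eqn: "\<And>r z. r > 0 \<Longrightarrow> field_eq r (G r z) (Gr r z) (Gz r z) (Grr r z) (Gzz r z)"
    and S_discrete: "discrete_set S"
    and finite_near_axis: "\<And>z0. z0 \<notin> S \<Longrightarrow> \<exists>e>0. \<exists>B. \<forall>r z H.
              0 < r \<and> r < e \<and> \<bar>z - z0\<bar> < e \<and> H \<in> {Gr, Gz, Grr, Grz, Gzz}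
              \<longrightarrow> norm (H r z) \<le> B"
    and rod_lt: "z1 < z2"
    and rod: "\<And>z. z1 < ereal z \<Longrightarrow> ereal z < z2 \<Longrightarrow> ker_dim (G 0 z) = 1"
    and rod_end1: "\<And>a. z1 = ereal a \<Longrightarrow> ker_dim (G 0 a) \<noteq> 1"
    and rod_end2: "\<And>b. z2 = ereal b \<Longrightarrow> ker_dim (G 0 b) \<noteq> 1"
  shows "\<exists>\<Lambda> :: real^'n^'n. orthogonal_matrix \<Lambda> \<and>
           (\<forall>z. z1 \<le> ereal z \<and> ereal z \<le> z2 \<longrightarrow>
              (\<forall>i. (transpose \<Lambda> ** G 0 z ** \<Lambda>) $ k $ i = 0))"
proof -
  define I where "I = {z. z1 < ereal z \<and> ereal z < z2}"
  have Iker: "ker_dim (G 0 z) = 1" if "z \<in> I" for z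
    using rod that unfolding I_def by auto
  have Glim: "((\<lambda>r. G r z) \<longlongrightarrow> G 0 z) (at_right 0)" for z by (rule Glim_right[OF cont])
  have G0c: "continuous_on UNIV (\<lambda>z. G 0 z)" by (rule G0_cont[OF cont])
  have sym0: "transpose (G 0 z) = G 0 z" for z using sym by simp
  define good where "good z u \<longleftrightarrow> norm u = 1 \<and> G 0 z *v u = 0 \<and> (\<forall>x. G 0 z *v x = 0 \<longrightarrow> x = (u \<bullet> x) *\<^sub>R u)" for z u
  define uk where "uk z = (SOME u. good z u)" for z
  have ukg: "good z (uk z)" if zI: "z \<in> I" for z
  proof -
    obtain u where "norm u = 1" "G 0 z *v u = 0" "\<And>x. G 0 z *v x = 0 \<Longrightarrow> x = (u \<bullet> x) *\<^sub>R u"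
      using ker_unit[OF Iker[OF zI]] by blast
    then have "good z u" unfolding good_def by blast
    then show ?thesis unfolding uk_def by (rule someI)
  qed
  define Pm where "Pm z = outer (uk z)" for z
  have Inb: "\<exists>d>0. \<forall>z. \<bar>z - t\<bar> < d \<longrightarrow> z \<in> I" if "t \<in> I" for t
  proof -
    have t1: "z1 < ereal t" and t2: "ereal t < z2" using that unfolding I_def by auto
    obtain p where p: "z1 < ereal p" "ereal p < ereal t" using ereal_dense2[OF t1] by blast
    obtain q where q: "ereal t < ereal q" "ereal q < z2" using ereal_dense2[OF t2] by blast
    have pt: "p < t" and tq: "t < q" using p q by auto
    show ?thesis
    proof (intro exI[of _ "min (t - p) (q - t)"] conjI allI impI)
      show "min (t - p) (q - t) > 0" using pt tq by simp
      fix z assume "\<bar>z - t\<bar> < min (t - p) (q - t)"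
      then have "p < z" "z < q" by auto
      then have pz: "ereal p < ereal z" and zq: "ereal z < ereal q" by auto
      have "z1 < ereal z" using p(1) pz by (rule less_trans)
      moreover have "ereal z < z2" using zq q(2) by (rule less_trans)
      ultimately show "z \<in> I" unfolding I_def by simp
    qed
  qed
  have PB: "\<exists>C\<ge>0. \<forall>z\<in>I. norm (Pm z - Pm t) \<le> C * norm (G 0 t *v uk z)" if tI: "t \<in> I" for t
  proof -
    have gt: "good t (uk t)" by (rule ukg[OF tI])
    obtain C where C: "C \<ge> 0" "\<And>x. norm x = 1 \<Longrightarrow> norm (outer x - outer (uk t)) \<le> C * norm (G 0 t *v x)"
      using proj_bound[OF sym0, of "uk t" t] gt unfolding good_def by blast
    show ?thesis
    proof (intro exI[of _ C] conjI ballI)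
      show "C \<ge> 0" by (rule C(1))
      fix z assume "z \<in> I"
      then have "norm (uk z) = 1" using ukg unfolding good_def by blast
      then show "norm (Pm z - Pm t) \<le> C * norm (G 0 t *v uk z)" unfolding Pm_def by (rule C(2))
    qed
  qed
  have cont_Pm: "isCont Pm t" if tI: "t \<in> I" for t
  proof -
    obtain C where C: "C \<ge> 0" "\<And>z. z \<in> I \<Longrightarrow> norm (Pm z - Pm t) \<le> C * norm (G 0 t *v uk z)"
      using PB[OF tI] by blast
    obtain d where d: "d > 0" "\<And>z. \<bar>z - t\<bar> < d \<Longrightarrow> z \<in> I" using Inb[OF tI] by blast
    have "((\<lambda>z. Pm z - Pm t) \<longlongrightarrow> 0) (at t)"
    proof (rule Lim_null_comparison)
      show "eventually (\<lambda>z. norm (Pm z - Pm t) \<le> C * (real CARD('n) * real CARD('n) * norm (G 0 t - G 0 z) * 1)) (at t)"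
        unfolding eventually_at
      proof (intro exI[of _ d] conjI ballI impI)
        fix z :: real assume "z \<noteq> t \<and> dist z t < d"
        then have zI: "z \<in> I" using d(2) by (simp add: dist_real_def)
        then have gz: "good z (uk z)" by (rule ukg)
        have "G 0 t *v uk z = (G 0 t - G 0 z) *v uk z"
          using gz unfolding good_def by (simp add: matrix_vector_mult_diff_rdistrib)
        then have "norm (G 0 t *v uk z) \<le> real CARD('n) * real CARD('n) * norm (G 0 t - G 0 z) * 1"
          using norm_mv_le[of "G 0 t - G 0 z" "uk z"] gz unfolding good_def by simp
        then show "norm (Pm z - Pm t) \<le> C * (real CARD('n) * real CARD('n) * norm (G 0 t - G 0 z) * 1)"
          using C(2)[OF zI] C(1) by (meson mult_left_mono order_trans)
      qed (use d in auto)
      have "isCont (\<lambda>z. G 0 z) t" using G0c continuous_on_eq_continuous_at by blast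
      then have "((\<lambda>z. G 0 z) \<longlongrightarrow> G 0 t) (at t)" by (simp add: isCont_def)
      then have "((\<lambda>z. G 0 t - G 0 z) \<longlongrightarrow> 0) (at t)"
        using tendsto_diff[OF tendsto_const, of "\<lambda>z. G 0 z" "G 0 t" "at t" "G 0 t"] by simp
      then have h: "((\<lambda>z. norm (G 0 t - G 0 z)) \<longlongrightarrow> 0) (at t)" by (rule tendsto_norm_zero)
      have "((\<lambda>z. (C * (real CARD('n) * real CARD('n))) * norm (G 0 t - G 0 z)) \<longlongrightarrow> (C * (real CARD('n) * real CARD('n))) * 0) (at t)"
        by (rule tendsto_mult[OF tendsto_const h])
      then show "((\<lambda>z. C * (real CARD('n) * real CARD('n) * norm (G 0 t - G 0 z) * 1)) \<longlongrightarrow> 0) (at t)"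
        by (simp add: mult_ac)
    qed
    then show ?thesis unfolding isCont_def by (simp add: LIM_zero_iff)
  qed
  have der_Pm: "(Pm has_derivative (\<lambda>h. 0)) (at t within X)" if tI: "t \<in> I" and tS: "t \<notin> S" for t X
  proof -
    obtain e B where e: "e > 0" and bd: "\<And>r z H. 0 < r \<and> r < e \<and> \<bar>z - t\<bar> < e \<and> H \<in> {Gr, Gz, Grr, Grz, Gzz} \<Longrightarrow> norm (H r z) \<le> B"
      using finite_near_axis[OF tS] by blast
    obtain dI where dI: "dI > 0" "\<And>z. \<bar>z - t\<bar> < dI \<Longrightarrow> z \<in> I" using Inb[OF tI] by blast
    obtain C where C: "C \<ge> 0" "\<And>z. z \<in> I \<Longrightarrow> norm (Pm z - Pm t) \<le> C * norm (G 0 t *v uk z)"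
      using PB[OF tI] by blast
    show ?thesis
    proof (rule deriv0[where d="min e dI" and K="C * (real CARD('n) * real CARD('n) * (3 * B))"])
      show "min e dI > 0" using e dI by simp
      fix z assume z: "\<bar>z - t\<bar> < min e dI"
      then have zI: "z \<in> I" using dI by simp
      have gz: "good z (uk z)" by (rule ukg[OF zI])
      have ze: "\<bar>z - t\<bar> < e" using z by simp
      have lim: "((\<lambda>r. Gz r z *v uk z) \<longlongrightarrow> 0) (at_right 0)"
      proof (rule axis_limit[OF sym cont det dGr dGz eqn e])
        fix r :: real assume r: "0 < r" "r < e"
        show "norm (Gr r z) \<le> B \<and> norm (Gz r z) \<le> B \<and> norm (Grr r z) \<le> B \<and> norm (Gzz r z) \<le> B"
          using bd[of r z Gr] bd[of r z Gz] bd[of r z Grr] bd[of r z Gzz] r ze by auto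
      qed (use gz in \<open>auto simp: good_def\<close>)
      have "norm (G 0 t *v uk z) \<le> real CARD('n) * real CARD('n) * (\<bar>t - z\<bar> * (3 * B * \<bar>t - z\<bar>)) * norm (uk z)"
      proof (rule quad[OF dGz dGzz Glim e])
        show "\<And>r s. 0 < r \<Longrightarrow> r < e \<Longrightarrow> \<bar>s - t\<bar> < e \<Longrightarrow> norm (Gzz r s) \<le> B"
          using bd by blast
        show "\<bar>z - t\<bar> < e" by (rule ze)
        show "\<bar>t - t\<bar> < e" using e by simp
        show "G 0 z *v uk z = 0" using gz unfolding good_def by blast
        show "((\<lambda>r. Gz r z *v uk z) \<longlongrightarrow> 0) (at_right 0)" by (rule lim)
      qed
      also have "\<dots> = (real CARD('n) * real CARD('n) * (3 * B)) * (z - t)^2"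
        using gz unfolding good_def by (simp add: power2_eq_square abs_mult_self_eq algebra_simps)
      finally have "norm (G 0 t *v uk z) \<le> (real CARD('n) * real CARD('n) * (3 * B)) * (z - t)^2" .
      then show "norm (Pm z - Pm t) \<le> C * (real CARD('n) * real CARD('n) * (3 * B)) * (z - t)^2"
        using C(2)[OF zI] C(1) by (metis (no_types, lifting) mult.assoc mult_left_mono order_trans)
    qed
  qed
  have Iconv: "{lo..hi} \<subseteq> I" if "lo \<in> I" "hi \<in> I" for lo hi
  proof
    fix x assume "x \<in> {lo..hi}"
    then have lx: "ereal lo \<le> ereal x" and xh: "ereal x \<le> ereal hi" by auto
    have "z1 < ereal lo" using that(1) unfolding I_def by simp
    then have "z1 < ereal x" using lx by (rule less_le_trans)
    moreover have "ereal hi < z2" using that(2) unfolding I_def by simp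
    then have "ereal x < z2" using xh by (rule le_less_trans[rotated])
    ultimately show "x \<in> I" unfolding I_def by simp
  qed
  have const: "Pm z = Pm a" if aI: "a \<in> I" and zI: "z \<in> I" for a z
  proof -
    define lo where "lo = min a z"
    define hi where "hi = max a z"
    have sub: "{lo..hi} \<subseteq> I"
      by (rule Iconv) (use aI zI in \<open>auto simp: lo_def hi_def min_def max_def\<close>)
    have fin: "finite (S \<inter> {lo..hi})" by (rule discrete_finite[OF S_discrete])
    have cPm: "continuous_on {lo..hi} Pm"
      by (rule continuous_at_imp_continuous_on) (use sub cont_Pm in blast)
    have eq: "Pm x = Pm lo" if "x \<in> {lo..hi}" for x
    proof (rule has_derivative_zero_unique_strong_interval[OF fin cPm refl _ that])
      fix y assume "y \<in> {lo..hi} - S \<inter> {lo..hi}"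
      then show "(Pm has_derivative (\<lambda>h. 0)) (at y within {lo..hi})"
        using sub by (intro der_Pm) auto
    qed
    have "Pm a = Pm lo" by (rule eq) (auto simp: lo_def hi_def)
    moreover have "Pm z = Pm lo" by (rule eq) (auto simp: lo_def hi_def)
    ultimately show ?thesis by simp
  qed
  obtain a where a: "z1 < ereal a" "ereal a < z2" using ereal_dense2[OF rod_lt] by blast
  then have aI: "a \<in> I" unfolding I_def by simp
  define u0 where "u0 = uk a"
  have gu0: "good a u0" unfolding u0_def by (rule ukg[OF aI])
  have ker_I: "G 0 z *v u0 = 0" if zI: "z \<in> I" for z
  proof -
    have gz: "good z (uk z)" by (rule ukg[OF zI])
    have "Pm z *v u0 = Pm a *v u0" using const[OF aI zI] by simp
    then have "(uk z \<bullet> u0) *\<^sub>R uk z = (u0 \<bullet> u0) *\<^sub>R u0"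
      unfolding Pm_def outer_mv u0_def by simp
    then have "u0 = (uk z \<bullet> u0) *\<^sub>R uk z" using gu0 unfolding good_def by (simp add: dot_square_norm)
    then have "G 0 z *v u0 = (uk z \<bullet> u0) *\<^sub>R (G 0 z *v uk z)"
      by (metis matrix_vector_mult_scaleR)
    then show ?thesis using gz unfolding good_def by simp
  qed
  have fc: "continuous_on UNIV (\<lambda>z. G 0 z *v u0)"
    by (rule bounded_linear.continuous_on[OF mv_right_bl G0c])
  have ker_all: "G 0 z *v u0 = 0" if z: "z1 \<le> ereal z" "ereal z \<le> z2" for z
  proof (cases "z \<in> I")
    case True
    then show ?thesis by (rule ker_I)
  next
    case False
    have fz: "isCont (\<lambda>z. G 0 z *v u0) z" using fc continuous_on_eq_continuous_at by blast
    show ?thesis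
    proof (cases "ereal z = z1")
      case True
      obtain q where q: "ereal z < ereal q" "ereal q < z2" using ereal_dense2[of "ereal z" z2] True rod_lt by blast
      have "eventually (\<lambda>w. G 0 w *v u0 = 0) (at_right z)"
        unfolding eventually_at_right_field
      proof (intro exI[of _ q] conjI allI impI)
        show "q > z" using q by simp
        fix w assume wz: "w > z" and wq: "w < q"
        have "ereal w < ereal q" using wq by simp
        then have "ereal w < z2" using q(2) by (rule less_trans)
        moreover have "z1 < ereal w" using True[symmetric] wz by simp
        ultimately have "w \<in> I" unfolding I_def by simp
        then show "G 0 w *v u0 = 0" by (rule ker_I)
      qed
      then have "eventually (\<lambda>w. 0 = G 0 w *v u0) (at_right z)" by eventually_elim simp
      then have "((\<lambda>w. G 0 w *v u0) \<longlongrightarrow> 0) (at_right z)"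
        by (rule Lim_transform_eventually[OF tendsto_const])
      moreover have "((\<lambda>w. G 0 w *v u0) \<longlongrightarrow> G 0 z *v u0) (at_right z)"
        using fz by (simp add: isCont_def filterlim_at_split)
      ultimately show ?thesis using tendsto_unique[OF trivial_limit_at_right_real] by blast
    next
      case False2: False
      then have zz2: "ereal z = z2" using z \<open>z \<notin> I\<close> unfolding I_def by (auto simp: order_le_less)
      obtain p where p: "z1 < ereal p" "ereal p < ereal z" using ereal_dense2[of z1 "ereal z"] zz2 rod_lt by blast
      have "eventually (\<lambda>w. G 0 w *v u0 = 0) (at_left z)"
        unfolding eventually_at_left_field
      proof (intro exI[of _ p] conjI allI impI)
        show "p < z" using p by simp
        fix w assume pw: "p < w" and wz: "w < z"
        have "ereal p < ereal w" using pw by simp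
        then have "z1 < ereal w" using p(1) by (rule less_trans[rotated])
        moreover have "ereal w < z2" using zz2[symmetric] wz by simp
        ultimately have "w \<in> I" unfolding I_def by simp
        then show "G 0 w *v u0 = 0" by (rule ker_I)
      qed
      then have "eventually (\<lambda>w. 0 = G 0 w *v u0) (at_left z)" by eventually_elim simp
      then have "((\<lambda>w. G 0 w *v u0) \<longlongrightarrow> 0) (at_left z)"
        by (rule Lim_transform_eventually[OF tendsto_const])
      moreover have "((\<lambda>w. G 0 w *v u0) \<longlongrightarrow> G 0 z *v u0) (at_left z)"
        using fz by (simp add: isCont_def filterlim_at_split)
      ultimately show ?thesis using tendsto_unique[OF trivial_limit_at_left_real] by blast
    qed
  qed
  have nu0: "norm u0 = 1" using gu0 unfolding good_def by blast
  obtain L where L: "orthogonal_matrix L" "L *v axis k 1 = u0"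
    using orthogonal_matrix_exists_basis[OF nu0] by metis
  show ?thesis
  proof (intro exI[of _ L] conjI allI impI)
    show "orthogonal_matrix L" by (rule L(1))
    fix z i assume z: "z1 \<le> ereal z \<and> ereal z \<le> z2"
    define A where "A = transpose L ** G 0 z ** L"
    have "A *v axis k 1 = transpose L *v (G 0 z *v u0)"
      unfolding A_def using L(2) by (simp add: matrix_vector_mul_assoc[symmetric])
    also have "\<dots> = 0" using ker_all z by simp
    finally have "A *v axis k 1 = 0" .
    then have Aik: "A $ i $ k = 0"
      by (metis matrix_vector_mult_basis column_def vec_lambda_beta zero_index)
    have "transpose A = A" unfolding A_def by (simp add: matrix_transpose_mul sym0 matrix_mul_assoc)
    then have "A $ k $ i = A $ i $ k" by (metis transpose_def vec_lambda_beta)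
    then show "(transpose L ** G 0 z ** L) $ k $ i = 0" using Aik unfolding A_def by simp
  qed
qed

end
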